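(* Let $X$ be a Banach space and $(x_n)_{n\in\mathbb{N}}$ a sequence in $X$ with $\liminf_n \|x_n\|=0$, and let $\mathcal{I}$ be an ideal on $\mathbb{N}$ with the Baire property. Suppose that there exists $s\in S$ such that $\left(\sum_{i=1}^n x_{s(i)}\right)_n$ is unbounded (equivalently, there exists $p\in P$ such that $\left(\sum_{i=1}^n x_{p(i)}\right)_n$ is unbounded). Then the sets $E(\mathcal{I},(x_n))=\left\{s \in S : \left(\sum_{i=1}^n x_{s(i)}\right)_n \text{ is } \mathcal{I}\text{-bounded}\right\}$ and $F(\mathcal{I},(x_n))=\left\{p \in P : \left(\sum_{i=1}^n x_{p(i)}\right)_n \text{ is } \mathcal{I}\text{-bounded}\right\}$ are meager in $S$ and $P$, respectively.
   Context: An ideal on $\mathbb{N}$ is a family $\mathcal{I}\subset \mathcal{P}(\mathbb{N})$ with $\emptyset\in\mathcal{I}$, closed under finite unions and subsets, with $\mathbb{N}\notin\mathcal{I}$ and containing all finite subsets of $\mathbb{N}$. Identifying $\mathcal{P}(\mathbb{N})$ with $\{0,1\}^{\mathbb{N}}$ (product topology), $\mathcal{I}$ has the Baire property if it is the symmetric difference of an open set and a meager set. A sequence $(y_n)$ in a normed space is $\mathcal{I}$-bounded if there is $M>0$ with $\{n\in\mathbb{N} : \|y_n\|>M\}\in\mathcal{I}$. $S=\{s\in\mathbb{N}^{\mathbb{N}} : s \text{ strictly increasing}\}$, $P=\{p\in\mathbb{N}^{\mathbb{N}} : p \text{ a bijection of }\mathbb{N}\}$, with the subspace topology of $\mathbb{N}^{\mathbb{N}}$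 (product of discrete spaces). *)

theory Defs
  imports "HOL-Analysis.Analysis"
begin

definition nowhere_dense_in :: "'a topology \<Rightarrow> 'a set \<Rightarrow> bool" where
  "nowhere_dense_in T A \<longleftrightarrow> A \<subseteq> topspace T \<and> T interior_of (T closure_of A) = {}"

definition meager_in :: "'a topology \<Rightarrow> 'a set \<Rightarrow> bool" where
  "meager_in T A \<longleftrightarrow> A \<subseteq> topspace T \<and>
     (\<exists>F :: nat \<Rightarrow> 'a set. (\<forall>n. nowhere_dense_in T (F n)) \<and> A \<subseteq> (\<Union>n. F n))"

definition has_Baire_property_in :: "'a topology \<Rightarrow> 'a set \<Rightarrow> bool" where
  "has_Baire_property_in T A \<longleftrightarrow>
     (\<exists>U M. openin T U \<and> meager_in T M \<and> A = (U - M) \<union> (M - U))"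

definition cantor_top :: "(nat \<Rightarrow> bool) topology" where
  "cantor_top = product_topology (\<lambda>_. discrete_topology UNIV) UNIV"

definition baire_top :: "(nat \<Rightarrow> nat) topology" where
  "baire_top = product_topology (\<lambda>_. discrete_topology UNIV) UNIV"

definition is_ideal :: "nat set set \<Rightarrow> bool" where
  "is_ideal I \<longleftrightarrow> {} \<in> I \<and> (\<forall>A\<in>I. \<forall>B\<in>I. A \<union> B \<in> I) \<and>
     (\<forall>A\<in>I. \<forall>B. B \<subseteq> A \<longrightarrow> B \<in> I) \<and> UNIV \<notin> I \<and> (\<forall>A. finite A \<longrightarrow> A \<in> I)"

text \<open>Identification of \<open>P(\<nat>)\<close> with \<open>{0,1}^\<nat>\<close> via characteristic functions.\<close>
definition ideal_Baire_property :: "nat set set \<Rightarrow> bool" where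
  "ideal_Baire_property I \<longleftrightarrow> has_Baire_property_in cantor_top ((\<lambda>A n. n \<in> A) ` I)"

definition I_bounded :: "nat set set \<Rightarrow> (nat \<Rightarrow> 'a::real_normed_vector) \<Rightarrow> bool" where
  "I_bounded I y \<longleftrightarrow> (\<exists>M>0. {n. norm (y n) > M} \<in> I)"

definition incr_seqs :: "(nat \<Rightarrow> nat) set" where
  "incr_seqs = {s. strict_mono s}"

definition perms_nat :: "(nat \<Rightarrow> nat) set" where
  "perms_nat = {p. bij p}"

end

theory Submission
  imports Defs "HOL-Library.Infinite_Set"
begin


definition cyl :: "(nat \<Rightarrow> 'b) \<Rightarrow> nat \<Rightarrow> (nat \<Rightarrow> 'b) set" where
  "cyl Y m = {Z. \<forall>i<m. Z i = Y i}"

lemma cyl_open: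
  fixes Y :: "nat \<Rightarrow> 'b"
  shows "openin (product_topology (\<lambda>_. discrete_topology (UNIV::'b set)) UNIV) (cyl Y m)"
  unfolding openin_product_topology_alt
proof (intro ballI)
  fix x assume x: "x \<in> cyl Y m"
  show "\<exists>U. finite {i \<in> UNIV. U i \<noteq> topspace (discrete_topology (UNIV::'b set))} \<and>
          (\<forall>i\<in>UNIV. openin (discrete_topology UNIV) (U i)) \<and> x \<in> Pi\<^sub>E UNIV U \<and> Pi\<^sub>E UNIV U \<subseteq> cyl Y m"
    apply (rule exI[of _ "\<lambda>i. if i < m then {Y i} else UNIV"])
    using x by (auto simp: cyl_def PiE_def Pi_def intro: finite_subset[of _ "{..<m}"])
qed

lemma open_cyl:
  fixes X :: "nat \<Rightarrow> 'b"
  assumes "openin (product_topology (\<lambda>_. discrete_topology (UNIV::'b set)) UNIV) U" "X \<in> U"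
  shows "\<exists>n. cyl X n \<subseteq> U"
proof -
  obtain V where V: "finite {i \<in> UNIV. V i \<noteq> topspace (discrete_topology (UNIV::'b set))}"
    "X \<in> Pi\<^sub>E UNIV V" "Pi\<^sub>E UNIV V \<subseteq> U"
    using assms unfolding openin_product_topology_alt by blast
  then obtain n where n: "\<forall>i\<in>{i. V i \<noteq> UNIV}. i < n"
    by (metis (no_types, lifting) UNIV_I finite_nat_set_iff_bounded mem_Collect_eq topspace_discrete_topology)
  have "cyl X n \<subseteq> Pi\<^sub>E UNIV V"
  proof
    fix Z assume "Z \<in> cyl X n"
    then show "Z \<in> Pi\<^sub>E UNIV V" using V(2) n by (auto simp: cyl_def PiE_def Pi_def) (metis UNIV_I not_less)
  qed
  then show ?thesis using V by blast
qed


definition ndc :: "(nat \<Rightarrow> 'b) set \<Rightarrow> bool" where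
  "ndc F \<longleftrightarrow> (\<forall>X n. \<exists>Y m. n \<le> m \<and> (\<forall>i<n. Y i = X i) \<and> cyl Y m \<inter> F = {})"

lemma nowhere_dense_ndc:
  fixes F :: "(nat \<Rightarrow> 'b) set"
  assumes "nowhere_dense_in (product_topology (\<lambda>_. discrete_topology (UNIV::'b set)) UNIV) F"
  shows "ndc F"
  unfolding ndc_def
proof (intro allI)
  fix X :: "nat \<Rightarrow> 'b" and n
  let ?T = "product_topology (\<lambda>_. discrete_topology (UNIV::'b set)) UNIV"
  have int: "?T interior_of (?T closure_of F) = {}" using assms by (simp add: nowhere_dense_in_def)
  have "\<not> cyl X n \<subseteq> ?T closure_of F"
  proof
    assume "cyl X n \<subseteq> ?T closure_of F"
    then have "cyl X n \<subseteq> ?T interior_of (?T closure_of F)"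
      by (rule interior_of_maximal) (rule cyl_open)
    moreover have "X \<in> cyl X n" by (simp add: cyl_def)
    ultimately show False using int by blast
  qed
  then obtain W where W: "W \<in> cyl X n" "W \<notin> ?T closure_of F" by blast
  then obtain V where V: "W \<in> V" "openin ?T V" "V \<inter> F = {}"
    unfolding in_closure_of by auto
  obtain k where k: "cyl W k \<subseteq> V" using open_cyl[OF V(2) V(1)] by blast
  show "\<exists>Y m. n \<le> m \<and> (\<forall>i<n. Y i = X i) \<and> cyl Y m \<inter> F = {}"
  proof (intro exI conjI)
    show "n \<le> max n k" by simp
    show "\<forall>i<n. W i = X i" using W(1) by (simp add: cyl_def)
    have "cyl W (max n k) \<subseteq> cyl W k" by (auto simp: cyl_def)
    then show "cyl W (max n k) \<inter> F = {}" using k V(3) by blast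
  qed
qed

lemma cyl_mono: "m \<le> m' \<Longrightarrow> (\<forall>i<m. Y' i = Y i) \<Longrightarrow> cyl Y' m' \<subseteq> cyl Y m"
  by (auto simp: cyl_def)

lemma ndc_Un: assumes "ndc F" "ndc G" shows "ndc (F \<union> G)"
  unfolding ndc_def
proof (intro allI)
  fix X n
  obtain Y m where Y: "n \<le> m" "\<forall>i<n. Y i = X i" "cyl Y m \<inter> F = {}"
    using assms(1) unfolding ndc_def by blast
  obtain Y' m' where Y': "m \<le> m'" "\<forall>i<m. Y' i = Y i" "cyl Y' m' \<inter> G = {}"
    using assms(2) unfolding ndc_def by blast
  have "cyl Y' m' \<subseteq> cyl Y m" using cyl_mono Y' by blast
  then show "\<exists>Y m. n \<le> m \<and> (\<forall>i<n. Y i = X i) \<and> cyl Y m \<inter> (F \<union> G) = {}"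
    using Y Y' by (intro exI[of _ Y'] exI[of _ m'] conjI) auto
qed

lemma ndc_empty: "ndc {}" unfolding ndc_def by (intro allI exI[of _ 0] exI) auto

lemma ndc_UN_atMost: "(\<And>j. ndc (F j)) \<Longrightarrow> ndc (\<Union>j\<le>(k::nat). F j)"
  by (induction k) (auto simp: atMost_Suc ndc_Un)

lemma ndc_subset: assumes "ndc F" "G \<subseteq> F" shows "ndc G"
  unfolding ndc_def
proof (intro allI)
  fix X n
  obtain Y m where "n \<le> m" "\<forall>i<n. Y i = X i" "cyl Y m \<inter> F = {}"
    using assms(1) unfolding ndc_def by blast
  then show "\<exists>Y m. n \<le> m \<and> (\<forall>i<n. Y i = X i) \<and> cyl Y m \<inter> G = {}"
    using assms(2) by (intro exI[of _ Y] exI[of _ m] conjI) auto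
qed

lemma ndc_baire:
  fixes H :: "nat \<Rightarrow> (nat \<Rightarrow> 'b) set"
  assumes H: "\<And>j. ndc (H j)"
  shows "\<exists>Z. \<forall>j. Z \<notin> H j"
proof -
  define step where "step j p = (SOME q. snd p + 1 \<le> snd q \<and> (\<forall>i<snd p + 1. fst q i = fst p i) \<and> cyl (fst q) (snd q) \<inter> H j = {})"
    for j and p :: "(nat \<Rightarrow> 'b) \<times> nat"
  have stepP: "snd p + 1 \<le> snd (step j p) \<and> (\<forall>i<snd p + 1. fst (step j p) i = fst p i) \<and> cyl (fst (step j p)) (snd (step j p)) \<inter> H j = {}" for j p
  proof -
    obtain Y m where "snd p + 1 \<le> m" "\<forall>i<snd p + 1. Y i = fst p i" "cyl Y m \<inter> H j = {}"
      using H[of j] unfolding ndc_def by blast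
    then have "\<exists>q. snd p + 1 \<le> snd q \<and> (\<forall>i<snd p + 1. fst q i = fst p i) \<and> cyl (fst q) (snd q) \<inter> H j = {}"
      by (intro exI[of _ "(Y, m)"]) simp
    then show ?thesis unfolding step_def by (rule someI_ex)
  qed
  define seq where "seq = rec_nat (undefined, 0) step"
  have seq0: "seq 0 = (undefined, 0)" and seqS: "seq (Suc j) = step j (seq j)" for j
    by (simp_all add: seq_def)
  define Yj where "Yj j = fst (seq j)" for j
  define mj where "mj j = snd (seq j)" for j
  have m_ge: "j \<le> mj j" for j
  proof (induction j)
    case (Suc j)
    then show ?case using stepP[of "seq j" j] by (simp add: mj_def seqS)
  qed (simp add: mj_def seq0)
  have mmono: "mj j \<le> mj j'" if "j \<le> j'" for j j'
    using that
  proof (induction j' rule: dec_induct)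
    case (step k) then show ?case using stepP[of "seq k" k] by (simp add: mj_def seqS)
  qed simp
  have agree: "\<forall>i<mj j. Yj j' i = Yj j i" if "j \<le> j'" for j j'
    using that
  proof (induction j' rule: dec_induct)
    case (step k)
    have "\<forall>i<mj k. Yj (Suc k) i = Yj k i" using stepP[of "seq k" k] by (simp add: mj_def Yj_def seqS)
    then show ?case using step mmono[OF step(1)] by auto
  qed simp
  have avoid: "cyl (Yj (Suc j)) (mj (Suc j)) \<inter> H j = {}" for j
    using stepP[of "seq j" j] by (simp add: mj_def Yj_def seqS)
  define Z where "Z i = Yj (Suc i) i" for i
  have "Z \<in> cyl (Yj (Suc j)) (mj (Suc j))" for j
    unfolding cyl_def
  proof (intro CollectI allI impI)
    fix i assume i: "i < mj (Suc j)"
    show "Z i = Yj (Suc j) i"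
    proof (cases "Suc i \<le> Suc j")
      case True
      have "i < mj (Suc i)" using m_ge[of "Suc i"] by simp
      then show ?thesis using agree[OF True] by (simp add: Z_def)
    next
      case False
      then show ?thesis using agree[of "Suc j" "Suc i"] i by (simp add: Z_def)
    qed
  qed
  then show ?thesis using avoid by blast
qed



definition bcyl :: "(nat \<Rightarrow> 'b) \<Rightarrow> nat \<Rightarrow> (nat \<Rightarrow> 'b) \<Rightarrow> nat \<Rightarrow> (nat \<Rightarrow> 'b) set" where
  "bcyl X n t m = {Z. (\<forall>i<n. Z i = X i) \<and> (\<forall>i. n \<le> i \<and> i < m \<longrightarrow> Z i = t i)}"

lemma unif_finite:
  assumes F: "ndc F" and S: "finite S"
  shows "\<exists>m t. n < m \<and> (\<forall>X\<in>S. bcyl X n t m \<inter> F = {})"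
  using S
proof (induction S rule: finite_induct)
  case empty
  show ?case by (intro exI[of _ "Suc n"] exI) auto
next
  case (insert X S)
  then obtain m t where mt: "n < m" "\<forall>X\<in>S. bcyl X n t m \<inter> F = {}" by blast
  define Z0 where "Z0 i = (if i < n then X i else t i)" for i
  obtain Y m' where Y: "m \<le> m'" "\<forall>i<m. Y i = Z0 i" "cyl Y m' \<inter> F = {}"
    using F unfolding ndc_def by blast
  have "bcyl X n Y m' \<subseteq> cyl Y m'"
  proof
    fix Z assume Z: "Z \<in> bcyl X n Y m'"
    have "Z i = Y i" if "i < m'" for i
    proof (cases "i < n")
      case True
      then show ?thesis using Z Y(2) mt(1) by (auto simp: bcyl_def Z0_def)
    next
      case False
      then show ?thesis using Z that by (auto simp: bcyl_def)
    qed
    then show "Z \<in> cyl Y m'" by (simp add: cyl_def)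
  qed
  moreover have "bcyl X' n Y m' \<subseteq> bcyl X' n t m" for X'
    using Y(1,2) by (auto simp: bcyl_def Z0_def)
  ultimately show ?case using mt Y by (intro exI[of _ m'] exI[of _ Y]) fastforce
qed

lemma unif:
  fixes F :: "(nat \<Rightarrow> bool) set"
  assumes F: "ndc F"
  shows "\<exists>m t. n < m \<and> (\<forall>X. bcyl X n t m \<inter> F = {})"
proof -
  let ?S = "(\<lambda>A i. i \<in> A) ` Pow {..<n}"
  obtain m t where mt: "n < m" "\<forall>X\<in>?S. bcyl X n t m \<inter> F = {}"
    using unif_finite[OF F, of ?S n] by auto
  have "bcyl X n t m \<inter> F = {}" for X
  proof -
    let ?X = "\<lambda>i. i \<in> {i. i < n \<and> X i}"
    have "?X \<in> ?S" by (rule image_eqI[where x="{i. i < n \<and> X i}"]) auto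
    then have "bcyl ?X n t m \<inter> F = {}" using mt(2) by blast
    moreover have "bcyl X n t m = bcyl ?X n t m" by (auto simp: bcyl_def)
    ultimately show ?thesis by simp
  qed
  then show ?thesis using mt by blast
qed

lemma talagrand:
  fixes I :: "nat set set" and F :: "nat \<Rightarrow> (nat \<Rightarrow> bool) set"
  assumes hered: "\<forall>A\<in>I. \<forall>B. B \<subseteq> A \<longrightarrow> B \<in> I"
    and F: "\<And>j. ndc (F j)"
    and cover: "(\<lambda>A n. n \<in> A) ` I \<subseteq> (\<Union>j. F j)"
  shows "\<exists>nk::nat\<Rightarrow>nat. strict_mono nk \<and> (\<forall>A\<in>I. \<exists>j. \<forall>k\<ge>j. \<not> {nk k..<nk (Suc k)} \<subseteq> A)"
proof -
  define G where "G k = (\<Union>j\<le>k. F j)" for k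
  have G: "ndc (G k)" for k unfolding G_def by (rule ndc_UN_atMost[OF F])
  define step where "step k n = (SOME p. n < fst p \<and> (\<forall>X. bcyl X n (snd p) (fst p) \<inter> G k = {}))" for k n
  have stepP: "n < fst (step k n) \<and> (\<forall>X. bcyl X n (snd (step k n)) (fst (step k n)) \<inter> G k = {})" for k n
  proof -
    obtain m t where "n < m" "\<forall>X. bcyl X n t m \<inter> G k = {}" using unif[OF G[of k]] by blast
    then have "\<exists>p. n < fst p \<and> (\<forall>X. bcyl X n (snd p) (fst p) \<inter> G k = {})"
      by (intro exI[of _ "(m,t)"]) simp
    then show ?thesis unfolding step_def by (rule someI_ex)
  qed
  define nk where "nk = rec_nat 0 (\<lambda>k n. fst (step k n))"
  have nk0: "nk 0 = 0" and nkS: "nk (Suc k) = fst (step k (nk k))" for k by (simp_all add: nk_def)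
  define tk where "tk k = snd (step k (nk k))" for k
  have smono: "strict_mono nk" unfolding strict_mono_Suc_iff using stepP nkS by simp
  have avoid: "bcyl X (nk k) (tk k) (nk (Suc k)) \<inter> G k = {}" for X k
    using stepP[of "nk k" k] by (simp add: nkS tk_def)
  have uniq: "k = k'" if "nk k \<le> i" "i < nk (Suc k)" "nk k' \<le> i" "i < nk (Suc k')" for i k k'
  proof (rule ccontr)
    assume "k \<noteq> k'"
    then consider "Suc k \<le> k'" | "Suc k' \<le> k" by linarith
    then show False
      using that strict_mono_less_eq[OF smono] by (metis leD order_le_less_trans)
  qed
  have "\<exists>j. \<forall>k\<ge>j. \<not> {nk k..<nk (Suc k)} \<subseteq> A" if A: "A \<in> I" for A
  proof (rule ccontr)
    assume "\<not> ?thesis"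
    then have inf: "\<forall>j. \<exists>k\<ge>j. {nk k..<nk (Suc k)} \<subseteq> A" by blast
    define K where "K = {k. {nk k..<nk (Suc k)} \<subseteq> A}"
    define B where "B = {i. i \<in> A \<and> (\<forall>k\<in>K. nk k \<le> i \<and> i < nk (Suc k) \<longrightarrow> tk k i)}"
    have "B \<in> I" using hered A by (auto simp: B_def)
    then have "(\<lambda>n. n \<in> B) \<in> (\<Union>j. F j)" using cover by blast
    then obtain j where j: "(\<lambda>n. n \<in> B) \<in> F j" by blast
    obtain k where k: "k \<ge> j" "k \<in> K" using inf by (auto simp: K_def)
    have "(\<lambda>n. n \<in> B) \<in> bcyl (\<lambda>n. n \<in> B) (nk k) (tk k) (nk (Suc k))"
    proof -
      have "(i \<in> B) = tk k i" if "nk k \<le> i" "i < nk (Suc k)" for i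
      proof -
        have "i \<in> A" using k(2) that by (auto simp: K_def)
        moreover have "(\<forall>k'\<in>K. nk k' \<le> i \<and> i < nk (Suc k') \<longrightarrow> tk k' i) = tk k i"
          using uniq[OF that] k(2) that by blast
        ultimately show ?thesis by (simp add: B_def)
      qed
      then show ?thesis by (auto simp: bcyl_def)
    qed
    moreover have "(\<lambda>n. n \<in> B) \<in> G k" using j k(1) by (auto simp: G_def)
    ultimately show False using avoid[of "\<lambda>n. n \<in> B" k] by blast
  qed
  then show ?thesis using smono by blast
qed



lemma ndc_preimage:
  fixes F :: "(nat \<Rightarrow> bool) set" and X :: "nat \<Rightarrow> bool" and b :: bool
  assumes F: "ndc F"
  shows "ndc {Z::nat\<Rightarrow>bool. (\<lambda>i. if i < n then X i else (Z i = b)) \<in> F}"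
  unfolding ndc_def
proof (intro allI)
  fix W :: "nat \<Rightarrow> bool" and k
  let ?g = "\<lambda>(Z::nat\<Rightarrow>bool) i. if i < n then X i else (Z i = b)"
  have "\<exists>Y' m. max k n \<le> m \<and> (\<forall>i<max k n. Y' i = ?g W i) \<and> cyl Y' m \<inter> F = {}"
    using F[unfolded ndc_def, rule_format, of "max k n" "?g W"] .
  then obtain Y' m where Y': "max k n \<le> m" "\<forall>i<max k n. Y' i = ?g W i" "cyl Y' m \<inter> F = {}"
    by blast
  define Y where "Y i = (if i < n then W i else (Y' i = b))" for i
  have 1: "\<forall>i<k. Y i = W i" using Y'(2) by (auto simp: Y_def)
  have 2: "cyl Y m \<inter> {Z. ?g Z \<in> F} = {}"
  proof -
    have "?g Z \<in> cyl Y' m" if "Z \<in> cyl Y m" for Z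
      using that Y'(1,2) by (auto simp: cyl_def Y_def)
    then show ?thesis using Y'(3) by blast
  qed
  show "\<exists>Y m. k \<le> m \<and> (\<forall>i<k. Y i = W i) \<and> cyl Y m \<inter> {Z. ?g Z \<in> F} = {}"
    using 1 2 Y'(1) by (intro exI[of _ Y] exI[of _ m] conjI) auto
qed

lemma cantor_meager_ndc:
  assumes "meager_in cantor_top M"
  shows "\<exists>F :: nat \<Rightarrow> (nat \<Rightarrow> bool) set. (\<forall>j. ndc (F j)) \<and> M \<subseteq> (\<Union>j. F j)"
proof -
  have "\<exists>F :: nat \<Rightarrow> (nat \<Rightarrow> bool) set. (\<forall>n. nowhere_dense_in cantor_top (F n)) \<and> M \<subseteq> (\<Union>n. F n)"
    using assms unfolding meager_in_def by (rule conjunct2)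
  then obtain F :: "nat \<Rightarrow> (nat \<Rightarrow> bool) set" where F: "\<forall>n. nowhere_dense_in cantor_top (F n)" "M \<subseteq> (\<Union>n. F n)"
    by (elim exE conjE)
  have "ndc (F j)" for j using F(1)[rule_format, of j, unfolded cantor_top_def] by (rule nowhere_dense_ndc)
  then have "(\<forall>j. ndc (F j)) \<and> M \<subseteq> (\<Union>j. F j)" using F(2) by simp
  then show ?thesis by blast
qed

lemma ideal_meager:
  assumes ideal: "is_ideal I" and baire: "ideal_Baire_property I"
  shows "meager_in cantor_top ((\<lambda>A n. n \<in> A) ` I)"
proof -
  let ?C = "(\<lambda>A n. n \<in> A) ` I"
  have "\<exists>U M. openin cantor_top U \<and> meager_in cantor_top M \<and> ?C = (U - M) \<union> (M - U)"
    using baire unfolding ideal_Baire_property_def has_Baire_property_in_def .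
  then obtain U M where UM: "openin cantor_top U" "meager_in cantor_top M" "?C = (U - M) \<union> (M - U)"
    by blast
  show ?thesis
  proof (cases "U = {}")
    case True
    then have "?C = M" using UM(3) by simp
    then show ?thesis using UM(2) by simp
  next
    case False
    then obtain X where "X \<in> U" by blast
    then obtain n where n: "cyl X n \<subseteq> U" using open_cyl[of U X] UM(1) \<open>X \<in> U\<close> unfolding cantor_top_def by blast
    obtain Fm :: "nat \<Rightarrow> (nat \<Rightarrow> bool) set" where Fm: "\<forall>j. ndc (Fm j)" "M \<subseteq> (\<Union>j. Fm j)"
      using cantor_meager_ndc[OF UM(2)] by blast
    define g where "g b Z = (\<lambda>i. if i < n then X i else (Z i = b))" for b and Z :: "nat \<Rightarrow> bool"
    define H where "H j = {Z. g True Z \<in> Fm j} \<union> {Z. g False Z \<in> Fm j}" for j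
    have "ndc (H j)" for j
      unfolding H_def g_def by (intro ndc_Un ndc_preimage Fm(1)[rule_format])
    then obtain Z where Z: "\<forall>j. Z \<notin> H j" using ndc_baire[of H] by blast
    have inC: "g b Z \<in> ?C" for b
    proof -
      have "g b Z \<notin> M" using Z Fm(2) by (cases b) (auto simp: H_def)
      moreover have "g b Z \<in> U" using n by (auto simp: cyl_def g_def)
      ultimately show ?thesis using UM(3) by blast
    qed
    have memI: "{i. P i} \<in> I" if "(\<lambda>i. P i) \<in> ?C" for P
    proof -
      from that obtain A where "A \<in> I" "(\<lambda>i. P i) = (\<lambda>i. i \<in> A)" by auto
      then have "{i. P i} = A" by (metis Collect_mem_eq)
      then show ?thesis using \<open>A \<in> I\<close> by simp
    qed
    have "{i. g True Z i} \<in> I" "{i. g False Z i} \<in> I" using memI inC by auto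
    moreover have "{..<n} \<in> I" using ideal by (simp add: is_ideal_def)
    moreover have "UNIV = {i. g True Z i} \<union> {i. g False Z i} \<union> {..<n}"
    proof -
      have "i \<in> {i. g True Z i} \<union> {i. g False Z i} \<union> {..<n}" for i
        by (cases "i < n") (simp_all add: g_def)
      then show ?thesis by blast
    qed
    ultimately have "{i. g True Z i} \<union> {i. g False Z i} \<union> {..<n} \<in> I"
      using ideal unfolding is_ideal_def by blast
    with \<open>UNIV = _\<close> have "UNIV \<in> I" by simp
    then show ?thesis using ideal by (simp add: is_ideal_def)
  qed
qed

lemma ideal_partition:
  assumes ideal: "is_ideal I" and baire: "ideal_Baire_property I"
  shows "\<exists>nk::nat\<Rightarrow>nat. strict_mono nk \<and> (\<forall>A\<in>I. \<exists>j. \<forall>k\<ge>j. \<not> {nk k..<nk (Suc k)} \<subseteq> A)"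
proof -
  obtain F :: "nat \<Rightarrow> (nat \<Rightarrow> bool) set" where F: "\<forall>j. ndc (F j)" "(\<lambda>A n. n \<in> A) ` I \<subseteq> (\<Union>j. F j)"
    using cantor_meager_ndc[OF ideal_meager[OF assms]] by (elim exE conjE)
  have h: "\<forall>A\<in>I. \<forall>B. B \<subseteq> A \<longrightarrow> B \<in> I" using ideal by (simp add: is_ideal_def)
  show ?thesis by (rule talagrand[OF h F(1)[rule_format] F(2)])
qed



lemma nd_crit:
  assumes AS: "A \<subseteq> S"
    and crit: "\<forall>X\<in>S. \<forall>n. \<exists>Y\<in>S. \<exists>m. (\<forall>i<n. Y i = X i) \<and> (\<forall>Z\<in>S. (\<forall>i<m. Z i = Y i) \<longrightarrow> Z \<notin> A)"
  shows "nowhere_dense_in (subtopology baire_top S) A"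
proof -
  let ?T = "subtopology baire_top S"
  have top: "topspace ?T = S" by (simp add: baire_top_def)
  have "W \<notin> ?T interior_of (?T closure_of A)" for W
  proof
    assume W: "W \<in> ?T interior_of (?T closure_of A)"
    let ?W' = "?T interior_of (?T closure_of A)"
    have "openin ?T ?W'" by simp
    then obtain U' where U': "openin baire_top U'" "?W' = U' \<inter> S"
      unfolding openin_subtopology by blast
    have WS: "W \<in> S" "W \<in> U'" using W U'(2) by auto
    obtain n where n: "cyl W n \<subseteq> U'" using open_cyl[of U' W] U'(1) WS(2) unfolding baire_top_def by blast
    obtain Y m where Y: "Y \<in> S" "\<forall>i<n. Y i = W i" "\<forall>Z\<in>S. (\<forall>i<m. Z i = Y i) \<longrightarrow> Z \<notin> A"
      using crit WS(1) by blast
    have "Y \<in> cyl W n" using Y(2) by (simp add: cyl_def)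
    then have "Y \<in> U' \<inter> S" using n Y(1) by blast
    then have "Y \<in> ?W'" by (simp only: U'(2))
    then have Ycl: "Y \<in> ?T closure_of A" using interior_of_subset[of ?T "?T closure_of A"] by (rule rev_subsetD)
    have op: "openin ?T (S \<inter> cyl Y m)"
      by (rule openin_subtopology_Int2) (simp add: baire_top_def cyl_open)
    have "Y \<in> S \<inter> cyl Y m" using Y(1) by (simp add: cyl_def)
    moreover have "\<forall>T. Y \<in> T \<and> openin ?T T \<longrightarrow> (\<exists>y. y \<in> A \<and> y \<in> T)"
      using Ycl unfolding in_closure_of by (elim conjE)
    ultimately obtain Z where "Z \<in> A" "Z \<in> S \<inter> cyl Y m" using op by blast
    then show False using Y(3) by (auto simp: cyl_def)
  qed
  then show ?thesis unfolding nowhere_dense_in_def using AS top by auto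
qed

lemma complete_bij:
  fixes f :: "nat \<Rightarrow> nat"
  assumes inj: "inj_on f {..<m}"
  shows "\<exists>p. bij p \<and> (\<forall>i<m. p i = f i)"
proof -
  define C where "C = - (f ` {..<m})"
  have infC: "infinite C" unfolding C_def
    using Diff_infinite_finite[of "f ` {..<m}" UNIV] by (simp add: Compl_eq_Diff_UNIV)
  define p where "p i = (if i < m then f i else enumerate C (i - m))" for i
  have encC: "enumerate C a \<in> C" for a using enumerate_in_set[OF infC] .
  have "inj p"
  proof (rule injI)
    fix i i' assume eq: "p i = p i'"
    show "i = i'"
    proof (cases "i < m"; cases "i' < m")
      assume "i < m" "i' < m" then show ?thesis using eq inj by (simp add: p_def inj_on_def)
    next
      assume a: "i < m" "\<not> i' < m"
      then have "p i \<in> f ` {..<m}" "p i' \<in> C" using encC[of "i' - m"] by (simp_all add: p_def)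
      then show ?thesis using eq by (simp add: C_def)
    next
      assume a: "\<not> i < m" "i' < m"
      then have "p i' \<in> f ` {..<m}" "p i \<in> C" using encC[of "i - m"] by (simp_all add: p_def)
      then show ?thesis using eq by (simp add: C_def)
    next
      assume "\<not> i < m" "\<not> i' < m"
      then show ?thesis using eq strict_mono_enumerate[OF infC] by (simp add: p_def strict_mono_eq)
    qed
  qed
  moreover have "surj p"
  proof -
    have "y \<in> range p" for y
    proof (cases "y \<in> f ` {..<m}")
      case True
      then obtain i where "i < m" "y = f i" by auto
      then show ?thesis by (auto simp: p_def intro!: image_eqI[of _ _ i])
    next
      case False
      then have "y \<in> C" by (simp add: C_def)
      then obtain a where "enumerate C a = y" using enumerate_Ex[OF infC] by blast
      then show ?thesis by (auto simp: p_def intro!: image_eqI[of _ _ "a + m"])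
    qed
    then show ?thesis by blast
  qed
  ultimately show ?thesis by (intro exI[of _ p]) (auto simp: bij_def p_def)
qed

lemma sum_split: "(\<Sum>l<a+(b::nat). f l) = (\<Sum>l<a. f l) + (\<Sum>l<b. f (a+l))"
  by (induction b) (simp_all add: add.assoc)

lemma small_infinite:
  fixes x :: "nat \<Rightarrow> 'a::real_normed_vector"
  assumes liminf0: "liminf (\<lambda>n. ereal (norm (x n))) = 0" and e: "\<epsilon> > 0"
  shows "infinite {u. norm (x u) < \<epsilon>}"
proof
  assume fin: "finite {u. norm (x u) < \<epsilon>}"
  then obtain N where N: "\<forall>u\<in>{u. norm (x u) < \<epsilon>}. u < N"
    using finite_nat_set_iff_bounded by blast
  have ev: "eventually (\<lambda>n. y < ereal (norm (x n))) sequentially" if "y < ereal \<epsilon>" for y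
  proof -
    have "y < ereal (norm (x n))" if "n \<ge> N" for n
    proof -
      have "\<epsilon> \<le> norm (x n)"
      proof (rule ccontr)
        assume "\<not> \<epsilon> \<le> norm (x n)"
        then have "n \<in> {u. norm (x u) < \<epsilon>}" by simp
        then show False using N that by fastforce
      qed
      then show ?thesis using \<open>y < ereal \<epsilon>\<close> by (meson ereal_less_eq(3) order_less_le_trans)
    qed
    then show ?thesis unfolding eventually_sequentially by blast
  qed
  have "ereal \<epsilon> \<le> liminf (\<lambda>n. ereal (norm (x n)))"
    using ev by (simp add: le_Liminf_iff)
  then show False using liminf0 e by simp
qed



lemma big_block:
  fixes x :: "nat \<Rightarrow> 'a::real_normed_vector" and t :: "nat \<Rightarrow> nat" and r :: nat and B :: real
  assumes unb: "\<not> bounded (range (\<lambda>N. \<Sum>i\<le>N. x (t i)))"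
  shows "\<exists>e. norm (\<sigma> + (\<Sum>a<e. x (t (r + a)))) > B"
proof -
  define T where "T N = (\<Sum>i\<le>N. x (t i))" for N
  define P where "P = (\<Sum>i<r. x (t i))"
  define K where "K = \<bar>B\<bar> + norm \<sigma> + norm P + (\<Sum>N'<r. norm (T N'))"
  have "\<exists>N. norm (T N) > K"
  proof (rule ccontr)
    assume "\<not> ?thesis"
    then have "\<forall>y\<in>range T. norm y \<le> K" by (auto simp: not_less)
    then have "bounded (range T)" unfolding bounded_iff by blast
    then show False using unb unfolding T_def by simp
  qed
  then obtain N where N: "norm (T N) > K" by blast
  have "N \<ge> r"
  proof (rule ccontr)
    assume "\<not> r \<le> N"
    then have "norm (T N) \<le> (\<Sum>N'<r. norm (T N'))"
      by (intro member_le_sum) auto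
    then show False using N norm_ge_zero[of \<sigma>] norm_ge_zero[of P] abs_ge_zero[of B] unfolding K_def by linarith
  qed
  then have eq: "r + (Suc N - r) = Suc N" by simp
  have "T N = (\<Sum>i<Suc N. x (t i))" unfolding T_def using lessThan_Suc_atMost by simp
  also have "\<dots> = P + (\<Sum>a<Suc N - r. x (t (r + a)))"
    unfolding P_def using sum_split[of "\<lambda>i. x (t i)" r "Suc N - r"] eq by simp
  finally have TN: "T N = P + (\<Sum>a<Suc N - r. x (t (r + a)))" .
  have "norm (T N) \<le> norm (\<sigma> + (\<Sum>a<Suc N - r. x (t (r + a)))) + norm \<sigma> + norm P"
  proof -
    define S where "S = \<sigma> + (\<Sum>a<Suc N - r. x (t (r + a)))"
    have "T N = (S - \<sigma>) + P" using TN by (simp add: algebra_simps S_def)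
    then have "norm (T N) \<le> norm (S - \<sigma>) + norm P" using norm_triangle_ineq[of "S - \<sigma>" P] by simp
    moreover have "norm (S - \<sigma>) \<le> norm S + norm \<sigma>" by (rule norm_triangle_ineq4)
    ultimately show ?thesis unfolding S_def by linarith
  qed
  moreover have "0 \<le> (\<Sum>N'<r. norm (T N'))" by (simp add: sum_nonneg)
  ultimately have "norm (\<sigma> + (\<Sum>a<Suc N - r. x (t (r + a)))) > B"
    using N unfolding K_def by linarith
  then show ?thesis by blast
qed



lemma core:
  fixes x :: "nat \<Rightarrow> 'a::real_normed_vector" and t nk X :: "nat \<Rightarrow> nat" and M :: real
  assumes t: "strict_mono t" and unb: "\<not> bounded (range (\<lambda>N. \<Sum>i\<le>N. x (t i)))"
    and small: "\<forall>\<epsilon>>0. infinite {u. norm (x u) < \<epsilon>}"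
    and nk: "strict_mono nk"
    and Xc: "\<forall>i<n. X i < c"
  shows "\<exists>Y k. j \<le> k \<and> (\<forall>i<n. Y i = X i) \<and> n \<le> nk (Suc k) \<and>
     (\<forall>i l. n \<le> i \<longrightarrow> i < l \<longrightarrow> Y i < Y l) \<and> (\<forall>i\<ge>n. c \<le> Y i) \<and>
     (\<forall>Z. (\<forall>i<nk (Suc k). Z i = Y i) \<longrightarrow>
        (\<forall>i. nk k \<le> i \<and> i < nk (Suc k) \<longrightarrow> M < norm (\<Sum>l\<le>i. x (Z l))))"
proof -
  define \<sigma> where "\<sigma> = (\<Sum>l<n. x (X l))"
  obtain e where e: "norm (\<sigma> + (\<Sum>a<e. x (t (c + a)))) > M + 1"
    using big_block[where x=x and t=t and \<sigma>=\<sigma> and r=c and B="M + 1"] unb by blast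
  define q where "q = n + e"
  define k where "k = max j q"
  define L where "L = nk (Suc k)"
  have kq: "q \<le> nk k" using seq_suble[OF nk, of k] by (simp add: k_def)
  have kL: "nk k < L" using nk by (simp add: L_def strict_mono_def)
  define \<epsilon> where "\<epsilon> = 1 / (real L + 1)"
  have epos: "\<epsilon> > 0" by (simp add: \<epsilon>_def)
  define V where "V = {u. t (c + e) < u \<and> norm (x u) < \<epsilon>}"
  have "V = {u. norm (x u) < \<epsilon>} - {..t (c + e)}" by (auto simp: V_def)
  then have infV: "infinite V" using small epos by (simp add: Diff_infinite_finite)
  define v where "v = enumerate V"
  have sv: "strict_mono v" unfolding v_def using strict_mono_enumerate[OF infV] .
  have vV: "v a \<in> V" for a unfolding v_def using enumerate_in_set[OF infV] .
  define Y where "Y l = (if l < n then X l else if l < q then t (c + (l - n)) else v (l - q))" for l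
  have tc: "c \<le> t (c + a)" for a using seq_suble[OF t, of "c + a"] by simp
  have tv: "t (c + e) < v b" for b using vV[of b] by (simp add: V_def)
  have mono: "Y i < Y l" if "n \<le> i" "i < l" for i l
  proof (cases "l < q")
    case True
    then show ?thesis using that t by (simp add: Y_def strict_mono_def)
  next
    case lq: False
    show ?thesis
    proof (cases "i < q")
      case True
      then have "c + (i - n) < c + e" using that by (simp add: q_def)
      then have "t (c + (i - n)) < t (c + e)" using t by (simp add: strict_mono_def)
      then show ?thesis using True lq that tv[of "l - q"] by (simp add: Y_def)
    next
      case False
      then show ?thesis using lq that sv by (simp add: Y_def strict_mono_def)
    qed
  qed
  have ge: "c \<le> Y i" if "n \<le> i" for i
  proof (cases "i < q")
    case True
    then show ?thesis using that tc[of "i - n"] by (simp add: Y_def)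
  next
    case False
    then show ?thesis using that tv[of "i - q"] tc[of e] by (simp add: Y_def)
  qed
  have nL: "n \<le> L" using kq kL by (simp add: q_def)
  have norm_ok: "M < norm (\<Sum>l\<le>i. x (Z l))"
    if Z: "\<forall>i<L. Z i = Y i" and i: "nk k \<le> i" "i < L" for Z i
  proof -
    define g where "g l = x (Y l)" for l
    have "(\<Sum>l\<le>i. x (Z l)) = (\<Sum>l<Suc i. g l)"
      unfolding lessThan_Suc_atMost g_def using Z i by (intro sum.cong) auto
    also have "\<dots> = (\<Sum>l<q. g l) + (\<Sum>a<Suc i - q. g (q + a))"
      using sum_split[of g q "Suc i - q"] kq i by simp
    also have "(\<Sum>l<q. g l) = \<sigma> + (\<Sum>a<e. x (t (c + a)))"
      using sum_split[of g n e] unfolding q_def \<sigma>_def g_def Y_def by simp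
    also have "(\<Sum>a<Suc i - q. g (q + a)) = (\<Sum>a<Suc i - q. x (v a))"
      unfolding g_def Y_def q_def by simp
    finally have eq: "(\<Sum>l\<le>i. x (Z l)) = (\<sigma> + (\<Sum>a<e. x (t (c + a)))) + (\<Sum>a<Suc i - q. x (v a))" .
    have "norm (\<Sum>a<Suc i - q. x (v a)) \<le> (\<Sum>a<Suc i - q. norm (x (v a)))"
      by (rule norm_sum)
    also have "\<dots> \<le> (\<Sum>a<Suc i - q. \<epsilon>)"
      using vV by (intro sum_mono) (simp add: V_def less_imp_le)
    also have "\<dots> = real (Suc i - q) * \<epsilon>" by simp
    also have "\<dots> \<le> real L * \<epsilon>"
      using i epos by (intro mult_right_mono) auto
    also have "\<dots> < 1" unfolding \<epsilon>_def by (simp add: field_simps)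
    finally have tail: "norm (\<Sum>a<Suc i - q. x (v a)) < 1" .
    have "norm (\<sigma> + (\<Sum>a<e. x (t (c + a)))) \<le> norm (\<Sum>l\<le>i. x (Z l)) + norm (\<Sum>a<Suc i - q. x (v a))"
      unfolding eq by (metis add_diff_cancel norm_triangle_ineq4)
    then show ?thesis using e tail by linarith
  qed
  show ?thesis
    apply (rule exI[of _ Y], rule exI[of _ k])
    using mono ge nL norm_ok by (auto simp: k_def Y_def L_def)
qed



lemma meager_from:
  fixes F :: "nat \<Rightarrow> (nat \<Rightarrow> nat) set"
  assumes sub: "E \<subseteq> S" and cover: "E \<subseteq> (\<Union>n. F n)" and Fsub: "\<And>n. F n \<subseteq> S"
    and crit: "\<And>n. \<forall>X\<in>S. \<forall>n0. \<exists>Y\<in>S. \<exists>m. (\<forall>i<n0. Y i = X i) \<and> (\<forall>Z\<in>S. (\<forall>i<m. Z i = Y i) \<longrightarrow> Z \<notin> F n)"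
  shows "meager_in (subtopology baire_top S) E"
proof -
  have nd: "nowhere_dense_in (subtopology baire_top S) (F n)" for n
    by (rule nd_crit[OF Fsub crit])
  have top: "topspace (subtopology baire_top S) = S" by (simp add: baire_top_def)
  show ?thesis unfolding meager_in_def top
    by (intro conjI exI[of _ F] allI) (simp_all add: sub cover nd)
qed

theorem mainTheorem3:
  fixes x :: "nat \<Rightarrow> 'a::banach" and I :: "nat set set"
  assumes liminf0: "liminf (\<lambda>n. ereal (norm (x n))) = 0"
    and ideal: "is_ideal I"
    and baire: "ideal_Baire_property I"
    and unb: "\<exists>s\<in>incr_seqs. \<not> bounded (range (\<lambda>n. \<Sum>i\<le>n. x (s i)))"
  shows "meager_in (subtopology baire_top incr_seqs)
           {s\<in>incr_seqs. I_bounded I (\<lambda>n. \<Sum>i\<le>n. x (s i))} \<and>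
         meager_in (subtopology baire_top perms_nat)
           {p\<in>perms_nat. I_bounded I (\<lambda>n. \<Sum>i\<le>n. x (p i))}"
proof -
  obtain t :: "nat \<Rightarrow> nat" where t: "strict_mono t" "\<not> bounded (range (\<lambda>n. \<Sum>i\<le>n. x (t i)))"
    using unb unfolding incr_seqs_def by blast
  have small: "\<forall>\<epsilon>>0. infinite {u. norm (x u) < \<epsilon>}"
    using small_infinite[OF liminf0] by blast
  obtain nk :: "nat \<Rightarrow> nat" where nk: "strict_mono nk"
    and part: "\<forall>A\<in>I. \<exists>j. \<forall>k\<ge>j. \<not> {nk k..<nk (Suc k)} \<subseteq> A"
    using ideal_partition[OF ideal baire] by blast
  define Fb where "Fb (S :: (nat \<Rightarrow> nat) set) (n::nat) = (case prod_decode n of (Mn, j) \<Rightarrow>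
     {s\<in>S. \<forall>k\<ge>j. \<exists>i. nk k \<le> i \<and> i < nk (Suc k) \<and> norm (\<Sum>l\<le>i. x (s l)) \<le> real Mn})" for S n
  have Fsub: "Fb S n \<subseteq> S" for S n by (auto simp: Fb_def split: prod.splits)
  have cover: "{s\<in>S. I_bounded I (\<lambda>n. \<Sum>i\<le>n. x (s i))} \<subseteq> (\<Union>n. Fb S n)" for S
  proof
    fix s assume s: "s \<in> {s\<in>S. I_bounded I (\<lambda>n. \<Sum>i\<le>n. x (s i))}"
    then obtain Mr where Mr: "Mr > 0" "{n. norm (\<Sum>i\<le>n. x (s i)) > Mr} \<in> I"
      unfolding I_bounded_def by blast
    obtain j where j: "\<forall>k\<ge>j. \<not> {nk k..<nk (Suc k)} \<subseteq> {n. norm (\<Sum>i\<le>n. x (s i)) > Mr}"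
      using part Mr(2) by blast
    define Mn where "Mn = nat \<lceil>Mr\<rceil>"
    have MrMn: "Mr \<le> real Mn" unfolding Mn_def by linarith
    have "s \<in> Fb S (prod_encode (Mn, j))"
    proof -
      have "\<exists>i. nk k \<le> i \<and> i < nk (Suc k) \<and> norm (\<Sum>l\<le>i. x (s l)) \<le> real Mn" if kj: "k \<ge> j" for k
      proof -
        obtain i where "i \<in> {nk k..<nk (Suc k)}" "\<not> norm (\<Sum>l\<le>i. x (s l)) > Mr"
          using j kj by blast
        then show ?thesis using MrMn by (intro exI[of _ i]) auto
      qed
      then show ?thesis using s by (simp add: Fb_def)
    qed
    then show "s \<in> (\<Union>n. Fb S n)" by blast
  qed
  have notF: "Z \<notin> Fb S n"
    if h1: "\<forall>i. nk k \<le> i \<and> i < nk (Suc k) \<longrightarrow> real (fst (prod_decode n)) < norm (\<Sum>l\<le>i. x (Z l))"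
       and h2: "snd (prod_decode n) \<le> k" for Z S n k
  proof
    assume "Z \<in> Fb S n"
    then obtain i where "nk k \<le> i" "i < nk (Suc k)" "norm (\<Sum>l\<le>i. x (Z l)) \<le> real (fst (prod_decode n))"
      using h2 by (auto simp: Fb_def split: prod.splits)
    moreover have "nk k \<le> i \<and> i < nk (Suc k) \<longrightarrow> real (fst (prod_decode n)) < norm (\<Sum>l\<le>i. x (Z l))"
      using h1 by (rule spec)
    ultimately show False by linarith
  qed
  have critS: "\<forall>X\<in>incr_seqs. \<forall>n0. \<exists>Y\<in>incr_seqs. \<exists>m. (\<forall>i<n0. Y i = X i) \<and>
      (\<forall>Z\<in>incr_seqs. (\<forall>i<m. Z i = Y i) \<longrightarrow> Z \<notin> Fb incr_seqs n)" for n
  proof (intro ballI allI)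
    fix X n0 assume X: "X \<in> incr_seqs"
    define c where "c = (\<Sum>i<n0. X i) + 1"
    have Xc: "\<forall>i<n0. X i < c"
    proof (intro allI impI)
      fix i assume "i < n0"
      then have "X i \<le> (\<Sum>i<n0. X i)" by (intro member_le_sum) auto
      then show "X i < c" by (simp add: c_def)
    qed
    obtain Y k where Y: "snd (prod_decode n) \<le> k" "\<forall>i<n0. Y i = X i" "n0 \<le> nk (Suc k)"
      "\<forall>i l. n0 \<le> i \<longrightarrow> i < l \<longrightarrow> Y i < Y l" "\<forall>i\<ge>n0. c \<le> Y i"
      "\<forall>Z. (\<forall>i<nk (Suc k). Z i = Y i) \<longrightarrow>
        (\<forall>i. nk k \<le> i \<and> i < nk (Suc k) \<longrightarrow> real (fst (prod_decode n)) < norm (\<Sum>l\<le>i. x (Z l)))"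
      using core[where x=x and t=t and nk=nk and X=X and n=n0 and c=c, OF t(1) t(2) small nk Xc, of "snd (prod_decode n)" "real (fst (prod_decode n))"]
      by (elim exE conjE) (rule that; assumption)
    have "strict_mono Y"
    proof (rule strict_monoI)
      fix i l :: nat assume il: "i < l"
      show "Y i < Y l"
      proof (cases "l < n0")
        case True
        then show ?thesis using X il Y(2) by (simp add: incr_seqs_def strict_mono_def)
      next
        case False
        show ?thesis
        proof (cases "i < n0")
          case True
          have "Y i = X i" "X i < c" "c \<le> Y l" using True False Xc Y(2) Y(5) by auto
          then show ?thesis by linarith
        next
          case False
          then show ?thesis using Y(4) il by simp
        qed
      qed
    qed
    then have YS: "Y \<in> incr_seqs" by (simp add: incr_seqs_def)
    show "\<exists>Y\<in>incr_seqs. \<exists>m. (\<forall>i<n0. Y i = X i) \<and>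
      (\<forall>Z\<in>incr_seqs. (\<forall>i<m. Z i = Y i) \<longrightarrow> Z \<notin> Fb incr_seqs n)"
    proof (intro bexI[OF _ YS] exI[of _ "nk (Suc k)"] conjI ballI impI)
      show "\<forall>i<n0. Y i = X i" using Y(2) .
      fix Z assume "\<forall>i<nk (Suc k). Z i = Y i"
      then have "\<forall>i. nk k \<le> i \<and> i < nk (Suc k) \<longrightarrow> real (fst (prod_decode n)) < norm (\<Sum>l\<le>i. x (Z l))"
        using Y(6) by blast
      then show "Z \<notin> Fb incr_seqs n" using Y(1) by (rule notF)
    qed
  qed
  have critP: "\<forall>X\<in>perms_nat. \<forall>n0. \<exists>Y\<in>perms_nat. \<exists>m. (\<forall>i<n0. Y i = X i) \<and>
      (\<forall>Z\<in>perms_nat. (\<forall>i<m. Z i = Y i) \<longrightarrow> Z \<notin> Fb perms_nat n)" for n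
  proof (intro ballI allI)
    fix X n0 assume X: "X \<in> perms_nat"
    then have injX: "inj X" by (simp add: perms_nat_def bij_def)
    define c where "c = (\<Sum>i<n0. X i) + 1"
    have Xc: "\<forall>i<n0. X i < c"
    proof (intro allI impI)
      fix i assume "i < n0"
      then have "X i \<le> (\<Sum>i<n0. X i)" by (intro member_le_sum) auto
      then show "X i < c" by (simp add: c_def)
    qed
    obtain Y k where Y: "snd (prod_decode n) \<le> k" "\<forall>i<n0. Y i = X i" "n0 \<le> nk (Suc k)"
      "\<forall>i l. n0 \<le> i \<longrightarrow> i < l \<longrightarrow> Y i < Y l" "\<forall>i\<ge>n0. c \<le> Y i"
      "\<forall>Z. (\<forall>i<nk (Suc k). Z i = Y i) \<longrightarrow>
        (\<forall>i. nk k \<le> i \<and> i < nk (Suc k) \<longrightarrow> real (fst (prod_decode n)) < norm (\<Sum>l\<le>i. x (Z l)))"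
      using core[where x=x and t=t and nk=nk and X=X and n=n0 and c=c, OF t(1) t(2) small nk Xc, of "snd (prod_decode n)" "real (fst (prod_decode n))"]
      by (elim exE conjE) (rule that; assumption)
    have neq: "Y i \<noteq> Y l" if il: "i < l" for i l
    proof (cases "l < n0")
      case True
      then have "X i \<noteq> X l" using injX il by (metis inj_eq less_irrefl)
      then show ?thesis using True il Y(2) by simp
    next
      case False
      show ?thesis
      proof (cases "i < n0")
        case True
        have "Y i = X i" "X i < c" "c \<le> Y l" using True False Xc Y(2) Y(5) by auto
        then show ?thesis by linarith
      next
        case False
        then have "Y i < Y l" using Y(4) il by simp
        then show ?thesis by simp
      qed
    qed
    have "inj_on Y {..<nk (Suc k)}"
    proof (rule inj_onI)
      fix i l assume "Y i = Y l"
      then show "i = l" using neq[of i l] neq[of l i] by (metis linorder_neqE_nat)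
    qed
    then obtain p where p: "bij p" "\<forall>i<nk (Suc k). p i = Y i" using complete_bij by blast
    have pP: "p \<in> perms_nat" using p(1) by (simp add: perms_nat_def)
    show "\<exists>Y\<in>perms_nat. \<exists>m. (\<forall>i<n0. Y i = X i) \<and>
      (\<forall>Z\<in>perms_nat. (\<forall>i<m. Z i = Y i) \<longrightarrow> Z \<notin> Fb perms_nat n)"
    proof (intro bexI[OF _ pP] exI[of _ "nk (Suc k)"] conjI ballI impI)
      show "\<forall>i<n0. p i = X i" using Y(2) Y(3) p(2) by auto
      fix Z assume "\<forall>i<nk (Suc k). Z i = p i"
      then have "\<forall>i<nk (Suc k). Z i = Y i" using p(2) by auto
      then have "\<forall>i. nk k \<le> i \<and> i < nk (Suc k) \<longrightarrow> real (fst (prod_decode n)) < norm (\<Sum>l\<le>i. x (Z l))"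
        using Y(6) by blast
      then show "Z \<notin> Fb perms_nat n" using Y(1) by (rule notF)
    qed
  qed
  show ?thesis
  proof
    show "meager_in (subtopology baire_top incr_seqs) {s\<in>incr_seqs. I_bounded I (\<lambda>n. \<Sum>i\<le>n. x (s i))}"
      by (rule meager_from[OF _ cover Fsub critS]) auto
    show "meager_in (subtopology baire_top perms_nat) {p\<in>perms_nat. I_bounded I (\<lambda>n. \<Sum>i\<le>n. x (p i))}"
      by (rule meager_from[OF _ cover Fsub critP]) auto
  qed
qed


end
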